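(* Let $\mathcal{A}\subseteq\mathcal{B}$ be sub-$\sigma$-algebras of a complete probability space $(\Omega,\mathcal{F},P)$. If $x:L_\infty(\mathcal{B})\to L_\infty(\mathcal{A})$ is a weak $\mathcal{A}$-homogeneous monotone linear operator that is continuous from above, then $x$ is $\mathcal{A}$-homogeneous.
   Context: Weak $\mathcal{A}$-homogeneous: $x(1_AX)=1_Ax(X)$ for all $A\in\mathcal{A}$, $X\in L_\infty(\mathcal{B})$. $\mathcal{A}$-homogeneous: $x(fX)=fx(X)$ for all $f\in L^+_\infty(\mathcal{A})$. Continuous from above: for every nonincreasing sequence $X_n$ with a.s. limit $X$, $x(X_n)\downarrow x(X)$ a.s. *)

theory Defs
  imports "HOL-Probability.Probability"
begin

text \<open>Elements of L-infinity are equivalence classes modulo M-a.s. equality; an operator on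
  classes is modelled as a map on representatives that respects a.s. equality.\<close>
definition Linf :: "'a measure \<Rightarrow> 'a measure \<Rightarrow> ('a \<Rightarrow> real) set" where
  "Linf M F = {X. X \<in> borel_measurable F \<and> (\<exists>C. AE \<omega> in M. \<bar>X \<omega>\<bar> \<le> C)}"

definition Linf_pos :: "'a measure \<Rightarrow> 'a measure \<Rightarrow> ('a \<Rightarrow> real) set" where
  "Linf_pos M F = {f \<in> Linf M F. AE \<omega> in M. 0 \<le> f \<omega>}"

definition Linf_operator ::
  "'a measure \<Rightarrow> 'a measure \<Rightarrow> 'a measure \<Rightarrow> (('a \<Rightarrow> real) \<Rightarrow> ('a \<Rightarrow> real)) \<Rightarrow> bool" where
  "Linf_operator M A B x \<longleftrightarrow>
     (\<forall>X\<in>Linf M B. x X \<in> Linf M A) \<and>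
     (\<forall>X\<in>Linf M B. \<forall>Y\<in>Linf M B. (AE \<omega> in M. X \<omega> = Y \<omega>) \<longrightarrow> (AE \<omega> in M. x X \<omega> = x Y \<omega>))"

definition linear_op ::
  "'a measure \<Rightarrow> 'a measure \<Rightarrow> (('a \<Rightarrow> real) \<Rightarrow> ('a \<Rightarrow> real)) \<Rightarrow> bool" where
  "linear_op M B x \<longleftrightarrow>
     (\<forall>X\<in>Linf M B. \<forall>Y\<in>Linf M B. \<forall>a b::real.
        AE \<omega> in M. x (\<lambda>t. a * X t + b * Y t) \<omega> = a * x X \<omega> + b * x Y \<omega>)"

definition monotone_op ::
  "'a measure \<Rightarrow> 'a measure \<Rightarrow> (('a \<Rightarrow> real) \<Rightarrow> ('a \<Rightarrow> real)) \<Rightarrow> bool" where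
  "monotone_op M B x \<longleftrightarrow>
     (\<forall>X\<in>Linf M B. \<forall>Y\<in>Linf M B. (AE \<omega> in M. X \<omega> \<le> Y \<omega>) \<longrightarrow> (AE \<omega> in M. x X \<omega> \<le> x Y \<omega>))"

definition weak_homogeneous ::
  "'a measure \<Rightarrow> 'a measure \<Rightarrow> 'a measure \<Rightarrow> (('a \<Rightarrow> real) \<Rightarrow> ('a \<Rightarrow> real)) \<Rightarrow> bool" where
  "weak_homogeneous M A B x \<longleftrightarrow>
     (\<forall>S\<in>sets A. \<forall>X\<in>Linf M B.
        AE \<omega> in M. x (\<lambda>t. indicator S t * X t) \<omega> = indicator S \<omega> * x X \<omega>)"

definition homogeneous ::
  "'a measure \<Rightarrow> 'a measure \<Rightarrow> 'a measure \<Rightarrow> (('a \<Rightarrow> real) \<Rightarrow> ('a \<Rightarrow> real)) \<Rightarrow> bool" where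
  "homogeneous M A B x \<longleftrightarrow>
     (\<forall>f\<in>Linf_pos M A. \<forall>X\<in>Linf M B.
        AE \<omega> in M. x (\<lambda>t. f t * X t) \<omega> = f \<omega> * x X \<omega>)"

definition cont_from_above ::
  "'a measure \<Rightarrow> 'a measure \<Rightarrow> (('a \<Rightarrow> real) \<Rightarrow> ('a \<Rightarrow> real)) \<Rightarrow> bool" where
  "cont_from_above M B x \<longleftrightarrow>
     (\<forall>Xs X. (\<forall>n. Xs n \<in> Linf M B) \<longrightarrow> X \<in> Linf M B \<longrightarrow>
        (AE \<omega> in M. decseq (\<lambda>n. Xs n \<omega>) \<and> (\<lambda>n. Xs n \<omega>) \<longlonglongrightarrow> X \<omega>) \<longrightarrow>
        (AE \<omega> in M. decseq (\<lambda>n. x (Xs n) \<omega>) \<and> (\<lambda>n. x (Xs n) \<omega>) \<longlonglongrightarrow> x X \<omega>))"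

end

theory Submission
  imports Defs
begin

lemma count_floor:
  fixes y :: real
  assumes "0 \<le> y"
  shows "(\<Sum>k<N. (if real k + 1 \<le> y then 1 else 0::real)) = real (min N (nat \<lfloor>y\<rfloor>))"
proof (induction N)
  case 0 then show ?case by simp
next
  case (Suc N)
  have "(real N + 1 \<le> y) \<longleftrightarrow> Suc N \<le> nat \<lfloor>y\<rfloor>"
    using assms by (simp add: le_nat_iff le_floor_iff add.commute)
  then show ?case using Suc by (auto simp: min_def)
qed

lemma small_zero:
  fixes a b :: real
  assumes "\<And>n. \<bar>a\<bar> \<le> b / real (Suc n)"
  shows "a = 0"
proof (rule ccontr)
  assume "a \<noteq> 0"
  then have pos: "\<bar>a\<bar> > 0" by simp
  obtain n where n: "real n > b / \<bar>a\<bar>" using reals_Archimedean2 by blast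
  have "\<bar>a\<bar> \<le> b / real (Suc n)" by (rule assms)
  then have "\<bar>a\<bar> * real (Suc n) \<le> b" by (simp add: field_simps)
  moreover have "b < \<bar>a\<bar> * real n" using n pos by (simp add: field_simps)
  ultimately show False using pos by (simp add: algebra_simps)
qed

theorem lemma3p7:
  fixes M A B :: "'a measure" and x :: "('a \<Rightarrow> real) \<Rightarrow> ('a \<Rightarrow> real)"
  assumes "prob_space M" and "complete_measure M"
    and "subalgebra M A" and "subalgebra M B" and "sets A \<subseteq> sets B"
    and "Linf_operator M A B x"
    and "weak_homogeneous M A B x"
    and "monotone_op M B x"
    and "linear_op M B x"
    and "cont_from_above M B x"
  shows "homogeneous M A B x"
proof -
  have spA: "space A = space M" and spB: "space B = space M"
    using assms(3,4) by (auto simp: subalgebra_def)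
  have subBA: "subalgebra B A" using spA spB assms(5) by (simp add: subalgebra_def)
  have mAB: "g \<in> borel_measurable B" if "g \<in> borel_measurable A" for g
    using measurable_from_subalg[OF subBA that] .
  have lin: "AE \<omega> in M. x (\<lambda>t. a * X t + b * Y t) \<omega> = a * x X \<omega> + b * x Y \<omega>"
    if "X \<in> Linf M B" "Y \<in> Linf M B" for X Y a b
    using assms(9) that unfolding linear_op_def by blast
  have mono: "AE \<omega> in M. x X \<omega> \<le> x Y \<omega>"
    if "X \<in> Linf M B" "Y \<in> Linf M B" "AE \<omega> in M. X \<omega> \<le> Y \<omega>" for X Y
    using assms(8) that unfolding monotone_op_def by blast
  have opA: "x X \<in> Linf M A" if "X \<in> Linf M B" for X
    using assms(6) that unfolding Linf_operator_def by blast
  have opAE: "AE \<omega> in M. x X \<omega> = x Y \<omega>"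
    if "X \<in> Linf M B" "Y \<in> Linf M B" "AE \<omega> in M. X \<omega> = Y \<omega>" for X Y
    using assms(6) that unfolding Linf_operator_def by blast
  have one: "(\<lambda>t. 1::real) \<in> Linf M B" unfolding Linf_def by auto
  have Lmult: "(\<lambda>t. g t * X t) \<in> Linf M B"
    if "g \<in> borel_measurable A" "\<forall>t. \<bar>g t\<bar> \<le> c" "X \<in> Linf M B" for g c X
  proof -
    from that(3) obtain C where C: "AE \<omega> in M. \<bar>X \<omega>\<bar> \<le> C" and Xm: "X \<in> borel_measurable B"
      unfolding Linf_def by auto
    have "AE \<omega> in M. \<bar>g \<omega> * X \<omega>\<bar> \<le> \<bar>c\<bar> * \<bar>C\<bar>"
      using C
    proof eventually_elim
      case (elim \<omega>)
      have "\<bar>g \<omega> * X \<omega>\<bar> = \<bar>g \<omega>\<bar> * \<bar>X \<omega>\<bar>" by (simp add: abs_mult)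
      also have "\<dots> \<le> \<bar>c\<bar> * \<bar>C\<bar>"
        using elim that(2) by (intro mult_mono) (auto intro: order_trans)
      finally show ?case .
    qed
    moreover have "(\<lambda>t. g t * X t) \<in> borel_measurable B"
      using mAB[OF that(1)] Xm by measurable
    ultimately show ?thesis unfolding Linf_def by blast
  qed
  define good where "good g \<longleftrightarrow> g \<in> borel_measurable A \<and> (\<exists>c. \<forall>t. \<bar>g t\<bar> \<le> c) \<and>
     (\<forall>X\<in>Linf M B. AE \<omega> in M. x (\<lambda>t. g t * X t) \<omega> = g \<omega> * x X \<omega>)" for g
  have good_ind: "good (indicator S)" if "S \<in> sets A" for S
    using assms(7) that unfolding good_def weak_homogeneous_def
    by (auto intro!: exI[of _ 1] simp: indicator_def)
  have good_zero: "good (\<lambda>t. 0)"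
    unfolding good_def
  proof (intro conjI ballI)
    fix X assume X: "X \<in> Linf M B"
    show "AE \<omega> in M. x (\<lambda>t. 0 * X t) \<omega> = 0 * x X \<omega>"
      using lin[OF X X, of 0 0] by simp
  qed auto
  have good_add: "good (\<lambda>t. g t + h t)" if gg: "good g" and gh: "good h" for g h
  proof -
    obtain cg where cg: "\<forall>t. \<bar>g t\<bar> \<le> cg" using gg unfolding good_def by auto
    obtain ch where ch: "\<forall>t. \<bar>h t\<bar> \<le> ch" using gh unfolding good_def by auto
    have gm: "g \<in> borel_measurable A" and hm: "h \<in> borel_measurable A"
      using gg gh unfolding good_def by auto
    have "\<forall>t. \<bar>g t + h t\<bar> \<le> cg + ch"
    proof
      fix t
      have "\<bar>g t\<bar> \<le> cg" "\<bar>h t\<bar> \<le> ch" using cg ch by auto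
      then show "\<bar>g t + h t\<bar> \<le> cg + ch" using abs_triangle_ineq[of "g t" "h t"] by linarith
    qed
    moreover have "(\<lambda>t. g t + h t) \<in> borel_measurable A" using gm hm by measurable
    moreover have "AE \<omega> in M. x (\<lambda>t. (g t + h t) * X t) \<omega> = (g \<omega> + h \<omega>) * x X \<omega>"
      if X: "X \<in> Linf M B" for X
    proof -
      have gX: "(\<lambda>t. g t * X t) \<in> Linf M B" using Lmult[OF gm cg X] .
      have hX: "(\<lambda>t. h t * X t) \<in> Linf M B" using Lmult[OF hm ch X] .
      have eq: "(\<lambda>t. (g t + h t) * X t) = (\<lambda>t. 1 * (g t * X t) + 1 * (h t * X t))"
        by (simp add: algebra_simps)
      have 1: "AE \<omega> in M. x (\<lambda>t. g t * X t) \<omega> = g \<omega> * x X \<omega>"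
        using gg X unfolding good_def by blast
      have 2: "AE \<omega> in M. x (\<lambda>t. h t * X t) \<omega> = h \<omega> * x X \<omega>"
        using \<open>good h\<close> X unfolding good_def by blast
      show ?thesis unfolding eq using lin[OF gX hX, of 1 1] 1 2
        by eventually_elim (simp add: algebra_simps)
    qed
    ultimately show ?thesis unfolding good_def by blast
  qed
  have good_scale: "good (\<lambda>t. a * g t)" if gg: "good g" for g a
  proof -
    obtain cg where cg: "\<forall>t. \<bar>g t\<bar> \<le> cg" using gg unfolding good_def by auto
    have gm: "g \<in> borel_measurable A" using gg unfolding good_def by auto
    have "\<forall>t. \<bar>a * g t\<bar> \<le> \<bar>a\<bar> * cg" using cg by (auto simp: abs_mult intro: mult_left_mono)
    moreover have "(\<lambda>t. a * g t) \<in> borel_measurable A" using gm by measurable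
    moreover have "AE \<omega> in M. x (\<lambda>t. a * g t * X t) \<omega> = a * g \<omega> * x X \<omega>"
      if X: "X \<in> Linf M B" for X
    proof -
      have gX: "(\<lambda>t. g t * X t) \<in> Linf M B" using Lmult[OF gm cg X] .
      have eq: "(\<lambda>t. a * g t * X t) = (\<lambda>t. a * (g t * X t) + 0 * (g t * X t))"
        by (simp add: algebra_simps)
      have 1: "AE \<omega> in M. x (\<lambda>t. g t * X t) \<omega> = g \<omega> * x X \<omega>"
        using gg X unfolding good_def by blast
      show ?thesis unfolding eq using lin[OF gX gX, of a 0] 1
        by eventually_elim (simp add: algebra_simps)
    qed
    ultimately show ?thesis unfolding good_def by blast
  qed
  have good_sum: "good (\<lambda>t. \<Sum>k<N. g k t)" if "\<And>k. good (g k)" for g and N :: nat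
  proof (induction N)
    case 0 then show ?case using good_zero by simp
  next
    case (Suc N)
    show ?case using good_add[OF Suc that[of N]] by simp
  qed
  show ?thesis unfolding homogeneous_def
  proof (intro ballI)
    fix f X assume f: "f \<in> Linf_pos M A" and X: "X \<in> Linf M B"
    from f obtain C0 where fm: "f \<in> borel_measurable A" and C0: "AE \<omega> in M. \<bar>f \<omega>\<bar> \<le> C0"
      and fpos: "AE \<omega> in M. 0 \<le> f \<omega>"
      unfolding Linf_pos_def Linf_def by auto
    define C where "C = \<bar>C0\<bar>"
    have C0le: "0 \<le> C" unfolding C_def by simp
    define f' where "f' = (\<lambda>t. min C (max 0 (f t)))"
    have f'm: "f' \<in> borel_measurable A" unfolding f'_def using fm by measurable
    have f'b: "\<forall>t. \<bar>f' t\<bar> \<le> C" using C0le unfolding f'_def by auto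
    have f'0: "\<forall>t. 0 \<le> f' t" using C0le unfolding f'_def by auto
    have ff': "AE \<omega> in M. f \<omega> = f' \<omega>" using C0 fpos
      by eventually_elim (auto simp: f'_def C_def)
    from X obtain CX0 where CX0: "AE \<omega> in M. \<bar>X \<omega>\<bar> \<le> CX0" and Xm: "X \<in> borel_measurable B"
      unfolding Linf_def by auto
    define CX where "CX = \<bar>CX0\<bar>"
    have CX: "AE \<omega> in M. \<bar>X \<omega>\<bar> \<le> CX" using CX0 by eventually_elim (auto simp: CX_def)
    have CXpos: "0 \<le> CX" unfolding CX_def by simp
    have x1: "x (\<lambda>t. 1) \<in> Linf M A" using opA[OF one] .
    then obtain K0 where K0: "AE \<omega> in M. \<bar>x (\<lambda>t. 1) \<omega>\<bar> \<le> K0" unfolding Linf_def by auto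
    define Z where "Z = (\<lambda>t. f' t * X t)"
    have ZL: "Z \<in> Linf M B" unfolding Z_def using Lmult[OF f'm f'b X] .
    have Lshift: "(\<lambda>t. 1 * W t + c * 1) \<in> Linf M B" if W: "W \<in> Linf M B" for W c
    proof -
      from W obtain c0 where c0: "AE \<omega> in M. \<bar>W \<omega>\<bar> \<le> c0" and Wm: "W \<in> borel_measurable B"
        unfolding Linf_def by auto
      have "AE \<omega> in M. \<bar>1 * W \<omega> + c * 1\<bar> \<le> c0 + \<bar>c\<bar>"
        using c0 by eventually_elim auto
      moreover have "(\<lambda>t. 1 * W t + c * 1) \<in> borel_measurable B" using Wm by measurable
      ultimately show ?thesis unfolding Linf_def by blast
    qed
    define N where "N n = nat \<lceil>C * real (Suc n)\<rceil>" for n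
    define S where "S n k = {t \<in> space A. (real k + 1) / real (Suc n) \<le> f' t}" for n k
    define s where "s n = (\<lambda>t. (1 / real (Suc n)) * (\<Sum>k<N n. indicator (S n k) t))" for n
    have SA: "S n k \<in> sets A" for n k unfolding S_def using f'm by measurable
    have sgood: "good (s n)" for n
      unfolding s_def by (intro good_scale good_sum good_ind SA)
    have sapprox: "\<bar>s n t - f' t\<bar> \<le> 1 / real (Suc n)" if t: "t \<in> space M" for n t
    proof -
      let ?m = "real (Suc n)"
      have mpos: "?m > 0" by simp
      have ind: "indicator (S n k) t = (if real k + 1 \<le> ?m * f' t then 1 else 0::real)" for k
        using t spA mpos by (simp add: S_def indicator_def pos_divide_le_eq mult.commute)
      have y0: "0 \<le> ?m * f' t" using f'0 by simp
      have "(\<Sum>k<N n. indicator (S n k) t) = real (min (N n) (nat \<lfloor>?m * f' t\<rfloor>))"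
        unfolding ind by (rule count_floor[OF y0])
      also have "min (N n) (nat \<lfloor>?m * f' t\<rfloor>) = nat \<lfloor>?m * f' t\<rfloor>"
      proof -
        have "f' t \<le> C" using f'b by (auto simp: abs_le_iff)
        then have "?m * f' t \<le> ?m * C" by (rule mult_left_mono) simp
        then have "?m * f' t \<le> C * ?m" by (simp add: mult.commute)
        then have "\<lfloor>?m * f' t\<rfloor> \<le> \<lceil>C * ?m\<rceil>"
          by (meson floor_le_ceiling floor_mono order_trans)
        then have "nat \<lfloor>?m * f' t\<rfloor> \<le> N n" unfolding N_def by (rule nat_mono)
        then show ?thesis by (simp add: min_absorb2)
      qed
      also have "real (nat \<lfloor>?m * f' t\<rfloor>) = real_of_int \<lfloor>?m * f' t\<rfloor>" using y0 by simp
      finally have sum_eq: "(\<Sum>k<N n. indicator (S n k) t) = real_of_int \<lfloor>?m * f' t\<rfloor>" .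
      have seq: "s n t = real_of_int \<lfloor>?m * f' t\<rfloor> / ?m" by (simp add: s_def sum_eq)
      have l1: "real_of_int \<lfloor>?m * f' t\<rfloor> \<le> ?m * f' t" by (rule of_int_floor_le)
      have l2: "?m * f' t < real_of_int \<lfloor>?m * f' t\<rfloor> + 1" by (rule real_of_int_floor_add_one_gt)
      have "s n t - f' t = (real_of_int \<lfloor>?m * f' t\<rfloor> - ?m * f' t) / ?m"
        unfolding seq using mpos by (simp add: field_simps)
      also have "\<bar>\<dots>\<bar> = \<bar>real_of_int \<lfloor>?m * f' t\<rfloor> - ?m * f' t\<bar> / ?m" using mpos by simp
      also have "\<dots> \<le> 1 / ?m"
      proof (rule divide_right_mono)
        show "\<bar>real_of_int \<lfloor>?m * f' t\<rfloor> - ?m * f' t\<bar> \<le> 1" using l1 l2 by linarith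
      qed (use mpos in simp)
      finally show ?thesis .
    qed
    have est: "AE \<omega> in M. \<bar>s n \<omega> * x X \<omega> - x Z \<omega>\<bar> \<le> CX * \<bar>K0\<bar> / real (Suc n)" for n
    proof -
      define e where "e = CX / real (Suc n)"
      have e0: "0 \<le> e" unfolding e_def using CXpos by simp
      obtain cs where cs: "\<forall>t. \<bar>s n t\<bar> \<le> cs" using sgood[of n] unfolding good_def by auto
      have sm: "s n \<in> borel_measurable A" using sgood[of n] unfolding good_def by auto
      define Zn where "Zn = (\<lambda>t. s n t * X t)"
      have ZnL: "Zn \<in> Linf M B" unfolding Zn_def using Lmult[OF sm cs X] .
      have hs: "AE \<omega> in M. x Zn \<omega> = s n \<omega> * x X \<omega>"
        using sgood[of n] X unfolding good_def Zn_def by blast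
      have diff: "AE \<omega> in M. \<bar>Zn \<omega> - Z \<omega>\<bar> \<le> e" using CX AE_space
      proof eventually_elim
        case (elim \<omega>)
        have "\<bar>Zn \<omega> - Z \<omega>\<bar> = \<bar>s n \<omega> - f' \<omega>\<bar> * \<bar>X \<omega>\<bar>"
          unfolding Zn_def Z_def by (metis abs_mult left_diff_distrib)
        also have "\<dots> \<le> (1 / real (Suc n)) * CX"
          using elim sapprox[of \<omega> n] by (intro mult_mono) auto
        finally show ?case unfolding e_def by simp
      qed
      have L1: "(\<lambda>t. 1 * Z t + e * 1) \<in> Linf M B" using Lshift[OF ZL] .
      have L2: "(\<lambda>t. 1 * Zn t + e * 1) \<in> Linf M B" using Lshift[OF ZnL] .
      have m1: "AE \<omega> in M. x Zn \<omega> \<le> x (\<lambda>t. 1 * Z t + e * 1) \<omega>"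
        by (rule mono[OF ZnL L1]) (use diff in \<open>eventually_elim, auto simp: abs_le_iff\<close>)
      have m2: "AE \<omega> in M. x Z \<omega> \<le> x (\<lambda>t. 1 * Zn t + e * 1) \<omega>"
        by (rule mono[OF ZL L2]) (use diff in \<open>eventually_elim, auto simp: abs_le_iff\<close>)
      have l1: "AE \<omega> in M. x (\<lambda>t. 1 * Z t + e * 1) \<omega> = 1 * x Z \<omega> + e * x (\<lambda>t. 1) \<omega>"
        using lin[OF ZL one, of 1 e] by simp
      have l2: "AE \<omega> in M. x (\<lambda>t. 1 * Zn t + e * 1) \<omega> = 1 * x Zn \<omega> + e * x (\<lambda>t. 1) \<omega>"
        using lin[OF ZnL one, of 1 e] by simp
      show ?thesis using m1 m2 l1 l2 hs K0
      proof eventually_elim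
        case (elim \<omega>)
        have "x (\<lambda>t. 1) \<omega> \<le> \<bar>K0\<bar>" using elim by linarith
        then have a: "e * x (\<lambda>t. 1) \<omega> \<le> e * \<bar>K0\<bar>" using e0 by (rule mult_left_mono)
        have b: "e * \<bar>K0\<bar> = CX * \<bar>K0\<bar> / real (Suc n)" unfolding e_def by simp
        have "x Zn \<omega> - x Z \<omega> \<le> e * \<bar>K0\<bar>" "x Z \<omega> - x Zn \<omega> \<le> e * \<bar>K0\<bar>"
          using elim a by linarith+
        then show ?case using elim b by (simp add: abs_le_iff)
      qed
    qed
    have estall: "AE \<omega> in M. \<forall>n. \<bar>s n \<omega> * x X \<omega> - x Z \<omega>\<bar> \<le> CX * \<bar>K0\<bar> / real (Suc n)"
      using est by (simp add: AE_all_countable)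
    have xZ: "AE \<omega> in M. x Z \<omega> = f' \<omega> * x X \<omega>" using estall AE_space
    proof eventually_elim
      case (elim \<omega>)
      have "\<bar>f' \<omega> * x X \<omega> - x Z \<omega>\<bar> \<le> (\<bar>x X \<omega>\<bar> + CX * \<bar>K0\<bar>) / real (Suc n)" for n
      proof -
        have "\<bar>f' \<omega> * x X \<omega> - s n \<omega> * x X \<omega>\<bar> = \<bar>s n \<omega> - f' \<omega>\<bar> * \<bar>x X \<omega>\<bar>"
          by (metis abs_minus_commute abs_mult left_diff_distrib)
        also have "\<dots> \<le> (1 / real (Suc n)) * \<bar>x X \<omega>\<bar>"
          using sapprox[of \<omega> n] elim by (intro mult_right_mono) auto
        finally have a: "\<bar>f' \<omega> * x X \<omega> - s n \<omega> * x X \<omega>\<bar> \<le> \<bar>x X \<omega>\<bar> / real (Suc n)" by simp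
        have b: "\<bar>s n \<omega> * x X \<omega> - x Z \<omega>\<bar> \<le> CX * \<bar>K0\<bar> / real (Suc n)" using elim by blast
        have "\<bar>f' \<omega> * x X \<omega> - x Z \<omega>\<bar> \<le> \<bar>x X \<omega>\<bar> / real (Suc n) + CX * \<bar>K0\<bar> / real (Suc n)"
          using a b by linarith
        then show ?thesis by (simp add: add_divide_distrib)
      qed
      then have "f' \<omega> * x X \<omega> - x Z \<omega> = 0" by (rule small_zero)
      then show ?case by simp
    qed
    have fXL: "(\<lambda>t. f t * X t) \<in> Linf M B"
    proof -
      have "AE \<omega> in M. \<bar>f \<omega> * X \<omega>\<bar> \<le> C * CX" using ff' CX
      proof eventually_elim
        case (elim \<omega>)
        have fb: "\<bar>f' \<omega>\<bar> \<le> C" using f'b by blast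
        have "\<bar>f \<omega> * X \<omega>\<bar> = \<bar>f' \<omega>\<bar> * \<bar>X \<omega>\<bar>" using elim by (simp add: abs_mult)
        also have "\<dots> \<le> C * CX" using fb elim C0le by (intro mult_mono) auto
        finally show ?case .
      qed
      moreover have "(\<lambda>t. f t * X t) \<in> borel_measurable B" using mAB[OF fm] Xm by measurable
      ultimately show ?thesis unfolding Linf_def by blast
    qed
    have "AE \<omega> in M. x (\<lambda>t. f t * X t) \<omega> = x Z \<omega>"
      by (rule opAE[OF fXL ZL]) (use ff' in \<open>eventually_elim, simp add: Z_def\<close>)
    then show "AE \<omega> in M. x (\<lambda>t. f t * X t) \<omega> = f \<omega> * x X \<omega>" using xZ ff'
      by eventually_elim simp
  qed
qed

end
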